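(* Let $N>0$, $d>0$ be real numbers with $0<N<1$ and $d^{2}>N^{-2}-1$. Let $F(z)=(1-Nz)^{2}\left(1-\frac{d^{2}}{z^{2}-1}\right)$, $\varphi(z)=\frac{1}{d^{2}}+\frac{1-N^{-1}z}{(z^{2}-1)^{2}}$ and $I_{2}=(1,\sqrt{1+d^{2}})$. Then the equation $\varphi(z)=0$ has exactly one root $z_{01}$ in $I_{2}$. Moreover, for real $A>0$, the equation $F(z)+A=0$ (i.e. the quartic equation $(1-Nz)^{2}(z^{2}-1-d^{2})+A(z^{2}-1)=0$ in the complex variable $z$) has four real roots when $0<A\leq -F(z_{01})$, and has two real and two (non-real) complex roots when $A>-F(z_{01})$.
   Context: This is the (dimensionless) dispersion relation for Kelvin–Helmholtz perturbations of two thin co-flowing layers (a pure incompressible fluid and a bubbly fluid): $z=ad/(u_{20}-c)$ with $c$ the phase velocity, $d=1/(bk)$, $N=M/d$ with $M=(u_{20}-u_{10})/a$, and $A=h_0\rho_{20}/((H_0-h_0)\rho_{10})>0$. The equation $F(z)+A=0$ is regarded as the fourth-degree polynomial equation obtained by multiplying by $z^{2}-1$; roots are counted with multiplicity. *)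

theory Defs
  imports "HOL-Analysis.Analysis" "HOL-Computational_Algebra.Polynomial"
begin

definition KH_F :: "real \<Rightarrow> real \<Rightarrow> real \<Rightarrow> real" where
  "KH_F N d z = (1 - N * z)^2 * (1 - d^2 / (z^2 - 1))"

definition KH_phi :: "real \<Rightarrow> real \<Rightarrow> real \<Rightarrow> real" where
  "KH_phi N d z = 1 / d^2 + (1 - z / N) / (z^2 - 1)^2"

definition KH_quartic :: "real \<Rightarrow> real \<Rightarrow> real \<Rightarrow> complex poly" where
  "KH_quartic N d A = map_poly complex_of_real
     ([:1, -N:]^2 * [:-(1 + d^2), 0, 1:] + smult A [:-1, 0, 1:])"

definition real_root_count :: "complex poly \<Rightarrow> nat" where
  "real_root_count p = size (filter_mset (\<lambda>z. z \<in> \<real>) (proots p))"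

definition nonreal_root_count :: "complex poly \<Rightarrow> nat" where
  "nonreal_root_count p = size (filter_mset (\<lambda>z. z \<notin> \<real>) (proots p))"

end

theory Submission
  imports Defs "HOL-Computational_Algebra.Fundamental_Theorem_Algebra"
begin

lemma L1:
  fixes p :: "real poly"
  assumes "a < b" "poly p b > 0" "\<And>x. a < x \<Longrightarrow> x < b \<Longrightarrow> poly p x = 0 \<Longrightarrow> poly (pderiv p) x < 0"
    and "a < x" "x < b"
  shows "poly p x \<noteq> 0"
proof
  assume root: "poly p x = 0"
  have p0: "p \<noteq> 0" using assms(2) by auto
  define S where "S = {y. a < y \<and> y < b \<and> poly p y = 0}"
  have fin: "finite S" unfolding S_def by (rule finite_subset[OF _ poly_roots_finite[OF p0]]) auto
  have ne: "x \<in> S" using assms root S_def by auto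
  define m where "m = Max S"
  have mS: "m \<in> S" using fin ne m_def Max_in by auto
  hence m: "a < m" "m < b" "poly p m = 0" by (auto simp: S_def)
  have "poly (pderiv p) m < 0" using assms(3) m by auto
  from DERIV_neg_dec_right[OF poly_DERIV this] obtain e where e: "e>0" "\<forall>h>0. h<e \<longrightarrow> poly p m > poly p (m+h)" by auto
  define h where "h = min (e/2) ((b-m)/2)"
  have h: "h > 0" "h < e" "m + h < b" using e(1) m(1,2) unfolding h_def by (auto simp: min_def field_simps)
  have "poly p (m+h) < 0" using e(2) h m(3) by auto
  from poly_IVT_pos[OF h(3) this assms(2)] obtain y where y: "m+h<y" "y<b" "poly p y = 0" by auto
  have "y \<in> S" using y m h unfolding S_def by auto
  hence "y \<le> m" using fin m_def by auto
  thus False using y h by auto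
qed

lemma L2:
  fixes p :: "real poly"
  assumes "a < b" "poly p a > 0" "\<And>x. a < x \<Longrightarrow> x < b \<Longrightarrow> poly p x = 0 \<Longrightarrow> poly (pderiv p) x > 0"
    and "a < x" "x < b"
  shows "poly p x \<noteq> 0"
proof
  assume root: "poly p x = 0"
  have p0: "p \<noteq> 0" using assms(2) by auto
  define S where "S = {y. a < y \<and> y < b \<and> poly p y = 0}"
  have fin: "finite S" unfolding S_def by (rule finite_subset[OF _ poly_roots_finite[OF p0]]) auto
  have ne: "x \<in> S" using assms root S_def by auto
  define m where "m = Min S"
  have mS: "m \<in> S" using fin ne m_def Min_in by auto
  hence m: "a < m" "m < b" "poly p m = 0" by (auto simp: S_def)
  have "poly (pderiv p) m > 0" using assms(3) m by auto
  from DERIV_pos_inc_left[OF poly_DERIV this] obtain e where e: "e>0" "\<forall>h>0. h<e \<longrightarrow> poly p (m-h) < poly p m" by auto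
  define h where "h = min (e/2) ((m-a)/2)"
  have h: "h > 0" "h < e" "a < m - h" using e(1) m(1,2) unfolding h_def by (auto simp: min_def field_simps)
  have "poly p (m-h) < 0" using e(2) h m(3) by auto
  from poly_IVT_neg[OF h(3) assms(2) this] obtain y where y: "a<y" "y<m-h" "poly p y = 0" by auto
  have "y \<in> S" using y m h unfolding S_def by auto
  hence "m \<le> y" using fin m_def by auto
  thus False using y h by auto
qed

lemma L3:
  fixes p :: "real poly"
  assumes "\<And>x. a < x \<Longrightarrow> x < b \<Longrightarrow> poly p x = 0 \<Longrightarrow> poly (pderiv p) x < 0"
    and "a < x" "x < y" "y < b" "poly p x = 0" "poly p y = 0"
  shows False
proof -
  have "poly (pderiv p) y < 0" using assms by auto
  from DERIV_neg_dec_left[OF poly_DERIV this] obtain e where e: "e>0" "\<forall>h>0. h<e \<longrightarrow> poly p y < poly p (y-h)" by auto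
  define h where "h = min (e/2) ((y-x)/2)"
  have h: "h > 0" "h < e" "x < y - h" using e(1) assms(3) unfolding h_def by (auto simp: min_def field_simps)
  have c: "poly p (y-h) > 0" using e(2) h assms by auto
  have noroot: "poly p z \<noteq> 0" if "x < z" "z < y - h" for z
    by (rule L1[of x "y-h" p z]) (use h c assms that in auto)
  have "poly (pderiv p) x < 0" using assms by auto
  from DERIV_neg_dec_right[OF poly_DERIV this] obtain e' where e': "e'>0" "\<forall>h>0. h<e' \<longrightarrow> poly p x > poly p (x+h)" by auto
  define h' where "h' = min (e'/2) ((y-h-x)/2)"
  have h': "h' > 0" "h' < e'" "x + h' < y - h" using e'(1) h(3) unfolding h'_def by (auto simp: min_def field_simps)
  have "poly p (x+h') < 0" using e'(2) h' assms by auto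
  from poly_IVT_pos[OF h'(3) this c] obtain z where "x+h'<z" "z<y-h" "poly p z = 0" by auto
  thus False using noroot h' by auto
qed

lemma L3':
  fixes p :: "real poly"
  assumes "\<And>x. a < x \<Longrightarrow> x < b \<Longrightarrow> poly p x = 0 \<Longrightarrow> poly (pderiv p) x > 0"
    and "a < x" "x < y" "y < b" "poly p x = 0" "poly p y = 0"
  shows False
  by (rule L3[of a b "-p" x y]) (use assms in \<open>auto simp: pderiv_minus\<close>)


definition Pf :: "real \<Rightarrow> real \<Rightarrow> real \<Rightarrow> real \<Rightarrow> real" where
  "Pf N d A x = (1-N*x)^2*(x^2-1-d^2) + A*(x^2-1)"
definition Df :: "real \<Rightarrow> real \<Rightarrow> real \<Rightarrow> real \<Rightarrow> real" where
  "Df N d A x = -2*N*(1-N*x)*(x^2-1-d^2) + 2*x*(1-N*x)^2 + 2*A*x"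
definition Gf :: "real \<Rightarrow> real \<Rightarrow> real \<Rightarrow> real" where
  "Gf N d x = N*(x^2-1)^2 - d^2*(x-N)"
definition Pr :: "real \<Rightarrow> real \<Rightarrow> real \<Rightarrow> real poly" where
  "Pr N d A = [: (-(1+d^2) - A), (2*N*(1+d^2)), (1 + A - N^2*(1+d^2)), (-2*N), (N^2) :]"

lemma r_eq: "([:1, -N:]^2 * [:-(1 + d^2), 0, 1:] + smult A [:-1, 0, 1:] :: real poly) = Pr N d A"
  unfolding Pr_def by (simp add: power2_eq_square algebra_simps)

lemma q_eq: "KH_quartic N d A = [: complex_of_real (-(1+d^2) - A), complex_of_real (2*N*(1+d^2)),
   complex_of_real (1 + A - N^2*(1+d^2)), complex_of_real (-2*N), complex_of_real (N^2) :]"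
  unfolding KH_quartic_def r_eq Pr_def
  by (simp only: map_poly_pCons of_real_0 map_poly_0)

lemma poly_Pr: "poly (Pr N d A) x = Pf N d A x"
  unfolding Pr_def Pf_def by (simp add: power2_eq_square algebra_simps)

lemma poly_dPr: "poly (pderiv (Pr N d A)) x = Df N d A x"
  unfolding Pr_def Df_def by (simp add: pderiv_pCons power2_eq_square algebra_simps)

lemma poly_Q: "poly (KH_quartic N d A) (complex_of_real x) = complex_of_real (Pf N d A x)"
  unfolding q_eq Pf_def by (simp add: power2_eq_square algebra_simps)

lemma poly_dQ: "poly (pderiv (KH_quartic N d A)) (complex_of_real x) = complex_of_real (Df N d A x)"
  unfolding q_eq Df_def by (simp add: pderiv_pCons power2_eq_square algebra_simps)

lemma degQ: "N \<noteq> 0 \<Longrightarrow> degree (KH_quartic N d A) = 4"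
  unfolding q_eq by simp

lemma ident: "(x^2-1)*Df N d A x - 2*x*Pf N d A x = -2*(1-N*x)*Gf N d x"
  unfolding Df_def Pf_def Gf_def by (simp add: power2_eq_square algebra_simps)

lemma PF: "x^2 \<noteq> 1 \<Longrightarrow> Pf N d A x = (x^2-1)*(KH_F N d x + A)"
  unfolding Pf_def KH_F_def by (simp add: field_simps)

lemma phiG: "N \<noteq> 0 \<Longrightarrow> d \<noteq> 0 \<Longrightarrow> x^2 \<noteq> 1 \<Longrightarrow> KH_phi N d x = 0 \<longleftrightarrow> Gf N d x = 0"
  unfolding KH_phi_def Gf_def by (simp add: field_simps)

lemma G_sign:
  assumes "0 < N" "N < 1" "a > 1" "Gf N d a = 0" "z \<ge> 1"
  shows "(z < a \<longrightarrow> Gf N d z < 0) \<and> (a < z \<longrightarrow> Gf N d z > 0)"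
proof -
  define K where "K = (a-N)*(z+a)*(z^2+a^2-2) - (a^2-1)^2"
  have d2: "N*(a^2-1)^2 - d^2*(a-N) = 0" using assms(4) unfolding Gf_def by (simp add: algebra_simps)
  have "(a-N)*Gf N d z - N*(z-a)*K = (N*(a^2-1)^2 - d^2*(a-N))*(z-N)"
    unfolding Gf_def K_def by (simp add: power2_eq_square algebra_simps)
  hence id: "(a-N)*Gf N d z = N*(z-a)*K" using d2 by simp
  have a1: "a^2 - 1 > 0" using one_less_power[OF assms(3), of 2] by simp
  have m: "(1+a)*(a^2-1) \<le> (z+a)*(z^2+a^2-2)"
  proof (rule mult_mono)
    show "a^2 - 1 \<le> z^2+a^2-2" using one_le_power[OF assms(5), of 2] by simp
  qed (use assms a1 in auto)
  have "K \<ge> (a-N)*((1+a)*(a^2-1)) - (a^2-1)^2"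
    unfolding K_def using m assms by (simp add: mult_left_mono mult.assoc)
  moreover have "(a-N)*((1+a)*(a^2-1)) - (a^2-1)^2 = (a^2-1)*(a+1)*(1-N)"
    by (simp add: power2_eq_square algebra_simps)
  moreover have "(a^2-1)*(a+1)*(1-N) > 0" using a1 assms by simp
  ultimately have K: "K > 0" by linarith
  have aN: "a - N > 0" using assms by simp
  show ?thesis
  proof (intro conjI impI)
    assume "z < a"
    hence "N*(z-a)*K < 0" using K assms by (simp add: mult_pos_neg mult_neg_pos)
    thus "Gf N d z < 0" using id aN by (metis mult_less_0_iff not_less_iff_gr_or_eq)
  next
    assume "a < z"
    hence "N*(z-a)*K > 0" using K assms by simp
    thus "Gf N d z > 0" using id aN by (metis zero_less_mult_iff not_less_iff_gr_or_eq)
  qed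
qed


theorem proposition2:
  fixes N d :: real
  assumes "0 < N" and "N < 1" and "0 < d" and "d^2 > 1 / N^2 - 1"
  shows "(\<exists>!z. z \<in> {1<..<sqrt (1 + d^2)} \<and> KH_phi N d z = 0) \<and>
         (\<forall>z01. z01 \<in> {1<..<sqrt (1 + d^2)} \<and> KH_phi N d z01 = 0 \<longrightarrow>
            (\<forall>A::real. 0 < A \<longrightarrow>
               (A \<le> - KH_F N d z01 \<longrightarrow> real_root_count (KH_quartic N d A) = 4) \<and>
               (A > - KH_F N d z01 \<longrightarrow> real_root_count (KH_quartic N d A) = 2 \<and>
                                          nonreal_root_count (KH_quartic N d A) = 2)))"
proof -
  have N0: "N \<noteq> 0" and d0: "d \<noteq> 0" using assms by auto
  define s where "s = sqrt (1+d^2)"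
  have s2: "s^2 = 1 + d^2" unfolding s_def by simp
  have "0 < 1 + d^2" by (smt (verit) zero_le_power2)
  hence s0: "s > 0" unfolding s_def by simp
  have "1/N^2 < 1 + d^2" using assms(4) by simp
  hence ND: "N^2*(1+d^2) > 1" using assms(1) by (simp add: field_simps)
  have Ns: "N * s > 1"
  proof (rule ccontr)
    assume "\<not> (N * s > 1)"
    hence "(N * s)^2 \<le> 1" using assms(1) s0 by (intro power_le_one) auto
    thus False using ND s2 by (simp add: power_mult_distrib)
  qed
  have uN: "1/N > 1" using assms(1,2) by (simp add: field_simps)
  have s_gt: "s > 1/N" using Ns assms(1) by (simp add: field_simps)
  have s1: "s > 1" using s_gt uN by linarith
  have G1N: "Gf N d (1/N) < 0"
  proof -
    have "Gf N d (1/N) = (1/N - N)*(1/N^2 - 1 - d^2)"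
      unfolding Gf_def using N0 by (simp add: field_simps power2_eq_square)
    moreover have "1/N - N > 0" using uN assms(2) by linarith
    moreover have "1/N^2 - 1 - d^2 < 0" using assms(4) by linarith
    ultimately show ?thesis by (simp add: mult_pos_neg)
  qed
  have Gs: "Gf N d s > 0"
  proof -
    have e1: "s^2 - 1 = d^2" using s2 by simp
    have "Gf N d s = N*(d^2)^2 - d^2*(s-N)" unfolding Gf_def e1 by simp
    also have "\<dots> = d^2*(N*(1+d^2) - s)" by (simp add: algebra_simps power2_eq_square)
    also have "\<dots> = d^2*(N * s^2 - s)" using s2 by simp
    also have "\<dots> = d^2 * s * (N * s - 1)" by (simp add: algebra_simps power2_eq_square)
    finally show ?thesis using d0 s0 Ns by simp
  qed
  have cont: "continuous_on {1/N..s} (Gf N d)" unfolding Gf_def by (intro continuous_intros)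
  obtain z0 where z0: "1/N \<le> z0" "z0 \<le> s" "Gf N d z0 = 0"
    using IVT'[of "Gf N d" "1/N" 0 s, OF _ _ _ cont] G1N Gs s_gt by auto
  have z0b: "1/N < z0" "z0 < s" using z0 G1N Gs by (auto simp: le_less)
  have sq1: "x^2 \<noteq> 1" if "x > 1" for x :: real
    using one_less_power[OF that, of 2] by simp
  have phiG': "KH_phi N d x = 0 \<longleftrightarrow> Gf N d x = 0" if "x > 1" for x
    using phiG[OF N0 d0 sq1[OF that]] .
  have part1: "\<exists>!z. z \<in> {1<..<sqrt (1 + d^2)} \<and> KH_phi N d z = 0"
  proof (rule ex1I[of _ z0])
    show "z0 \<in> {1<..<sqrt (1 + d^2)} \<and> KH_phi N d z0 = 0"
      using z0b uN z0(3) phiG'[of z0] s_def by auto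
  next
    fix z assume z: "z \<in> {1<..<sqrt (1 + d^2)} \<and> KH_phi N d z = 0"
    hence z1: "z > 1" and Gz: "Gf N d z = 0" using phiG'[of z] by auto
    show "z = z0" using G_sign[OF assms(1,2) _ z0(3), of z] z1 Gz z0b uN by force
  qed
  have part2: "(A \<le> - KH_F N d z01 \<longrightarrow> real_root_count (KH_quartic N d A) = 4) \<and>
               (A > - KH_F N d z01 \<longrightarrow> real_root_count (KH_quartic N d A) = 2 \<and>
                                          nonreal_root_count (KH_quartic N d A) = 2)"
    if z01: "z01 \<in> {1<..<sqrt (1 + d^2)}" "KH_phi N d z01 = 0" and A: "0 < A" for z01 A
  proof -
    have z1: "1 < z01" "z01 < s" using z01(1) s_def by auto
    have Gz: "Gf N d z01 = 0" using phiG'[OF z1(1)] z01(2) by simp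
    have z1N: "1/N < z01"
    proof (rule ccontr)
      assume "\<not> 1/N < z01"
      hence "z01 < 1/N \<or> z01 = 1/N" by auto
      thus False using G_sign[OF assms(1,2) z1(1) Gz, of "1/N"] uN G1N Gz by auto
    qed
    have Gneg: "Gf N d y < 0" if "1 \<le> y" "y < z01" for y
      using G_sign[OF assms(1,2) z1(1) Gz, of y] that by auto
    have Gpos: "Gf N d y > 0" if "z01 < y" for y
      using G_sign[OF assms(1,2) z1(1) Gz, of y] that z1 by auto
    define Q where "Q = KH_quartic N d A"
    define p where "p = Pr N d A"
    have pP: "poly p x = Pf N d A x" for x unfolding p_def by (rule poly_Pr)
    have dpD: "poly (pderiv p) x = Df N d A x" for x unfolding p_def by (rule poly_dPr)
    have degQ4: "degree Q = 4" unfolding Q_def using degQ[OF N0] .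
    hence Q0: "Q \<noteq> 0" by auto
    have dQ0: "pderiv Q \<noteq> 0" using degQ4 pderiv_eq_0_iff[of Q] by simp
    have sizeQ: "size (proots Q) = 4" using size_proots_complex[of Q] degQ4 by simp
    have Qroot: "poly Q (complex_of_real x) = 0 \<longleftrightarrow> Pf N d A x = 0" for x
      unfolding Q_def poly_Q by simp
    have dQ: "poly (pderiv Q) (complex_of_real x) = complex_of_real (Df N d A x)" for x
      unfolding Q_def poly_dQ ..
    have ordpos: "order (complex_of_real x) Q \<ge> 1" if "Pf N d A x = 0" for x
      using order_root[of Q "complex_of_real x"] Q0 Qroot[of x] that by auto
    have ord1: "order (complex_of_real x) Q = 1" if "Pf N d A x = 0" "Df N d A x \<noteq> 0" for x
    proof -
      have "order (complex_of_real x) (pderiv Q) = 0"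
        using order_root[of "pderiv Q" "complex_of_real x"] dQ[of x] that(2) by auto
      thus ?thesis using order_pderiv[OF Q0, of "complex_of_real x"] Qroot[of x] that(1) by simp
    qed
    have ord2: "order (complex_of_real x) Q \<ge> 2" if "Pf N d A x = 0" "Df N d A x = 0" for x
    proof -
      have "order (complex_of_real x) (pderiv Q) \<noteq> 0"
        using order_root[of "pderiv Q" "complex_of_real x"] dQ[of x] that(2) dQ0 by auto
      thus ?thesis using order_pderiv[OF Q0, of "complex_of_real x"] Qroot[of x] that(1) by simp
    qed
    define Fm where "Fm = filter_mset (\<lambda>z. z \<in> \<real>) (proots Q)"
    have cFm: "count Fm x = (if x \<in> \<real> then order x Q else 0)" for x
      unfolding Fm_def using Q0 by simp
    have sFm: "size Fm \<le> 4" unfolding Fm_def using sizeQ size_filter_mset_lesseq[of _ "proots Q"] by metis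
    have rrc: "real_root_count (KH_quartic N d A) = size Fm"
      unfolding real_root_count_def Fm_def Q_def ..
    have nrc: "nonreal_root_count (KH_quartic N d A) = 4 - size Fm"
    proof -
      have "size (proots Q) = size Fm + size (filter_mset (\<lambda>z. z \<notin> \<real>) (proots Q))"
        unfolding Fm_def by (metis multiset_partition size_union)
      thus ?thesis unfolding nonreal_root_count_def Q_def[symmetric] using sizeQ by simp
    qed
    have ms: "(-s)^2 = s^2" by simp
    have Pms: "Pf N d A (-s) > 0" unfolding Pf_def ms s2 using A d0 by simp
    have Ps: "Pf N d A s > 0" unfolding Pf_def s2 using A d0 by simp
    have Pm1: "Pf N d A (-1) < 0" unfolding Pf_def using d0 assms(1) by (simp add: mult_pos_neg)
    have P1: "Pf N d A 1 < 0" unfolding Pf_def using d0 assms(2) by (simp add: mult_pos_neg)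
    have P1N: "Pf N d A (1/N) > 0"
    proof -
      have "1 - N*(1/N) = 0" using N0 by simp
      hence "Pf N d A (1/N) = A*((1/N)^2 - 1)" unfolding Pf_def by simp
      moreover have "(1/N)^2 > 1" using one_less_power[OF uN, of 2] by simp
      ultimately show ?thesis using A by simp
    qed
    obtain r1 where r1: "-s < r1" "r1 < -1" "Pf N d A r1 = 0"
      using poly_IVT_neg[of "-s" "-1" p] Pms Pm1 s1 pP by auto
    obtain r2 where r2: "1 < r2" "r2 < 1/N" "Pf N d A r2 = 0"
      using poly_IVT_pos[of 1 "1/N" p] P1 P1N uN pP by auto
    have Pz: "Pf N d A z01 = (z01^2 - 1)*(KH_F N d z01 + A)" using PF sq1[OF z1(1)] by blast
    have z2: "z01^2 - 1 > 0" using one_less_power[OF z1(1), of 2] by simp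
    have identr: "(x^2-1)*Df N d A x = -2*(1-N*x)*Gf N d x" if "Pf N d A x = 0" for x
      using ident[of x N d A] that by simp
    show ?thesis
    proof (intro conjI impI)
      assume Ale: "A \<le> - KH_F N d z01"
      show "real_root_count (KH_quartic N d A) = 4"
      proof (cases "A < - KH_F N d z01")
        case True
        have "Pf N d A z01 < 0" using Pz z2 True by (simp add: mult_pos_neg)
        then obtain r3 r4 where r3: "1/N < r3" "r3 < z01" "Pf N d A r3 = 0"
          and r4: "z01 < r4" "r4 < s" "Pf N d A r4 = 0"
          using poly_IVT_neg[of "1/N" z01 p] poly_IVT_pos[of z01 s p] P1N Ps z1N z1 pP by metis
        define M where "M = {#complex_of_real r1, complex_of_real r2, complex_of_real r3, complex_of_real r4#}"
        have "M \<subseteq># Fm"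
        proof (rule mset_subset_eqI)
          fix x
          show "count M x \<le> count Fm x"
            unfolding M_def cFm using r1 r2 r3 r4 ordpos[of r1] ordpos[of r2] ordpos[of r3] ordpos[of r4] z1N
            by auto
        qed
        hence "size M \<le> size Fm" by (rule size_mset_mono)
        thus ?thesis using sFm rrc unfolding M_def by simp
      next
        case False
        hence Aeq: "A = - KH_F N d z01" using Ale by simp
        have Pz0: "Pf N d A z01 = 0" using Pz Aeq by simp
        have "(z01^2-1)*Df N d A z01 = 0" using identr[OF Pz0] Gz by simp
        hence Dz0: "Df N d A z01 = 0" using z2 by simp
        define M where "M = {#complex_of_real r1, complex_of_real r2, complex_of_real z01, complex_of_real z01#}"
        have "M \<subseteq># Fm"
        proof (rule mset_subset_eqI)
          fix x
          show "count M x \<le> count Fm x"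
            unfolding M_def cFm using r1 r2 z1N ordpos[of r1] ordpos[of r2] ord2[OF Pz0 Dz0]
            by auto
        qed
        hence "size M \<le> size Fm" by (rule size_mset_mono)
        thus ?thesis using sFm rrc unfolding M_def by simp
      qed
    next
      assume Agt: "A > - KH_F N d z01"
      have Pz0: "Pf N d A z01 > 0" using Pz z2 Agt by simp
      have D1: "Df N d A y < 0" if "-s < y" "y < -1" "Pf N d A y = 0" for y
      proof -
        have ga: "N*(y^2-1)^2 \<ge> 0" using assms(1) by simp
        have gb: "d^2*(y-N) < 0" using d0 that assms(1) by (intro mult_pos_neg) auto
        have "Gf N d y > 0" unfolding Gf_def using ga gb by linarith
        moreover have "N*y < 0" using that assms(1) by (intro mult_pos_neg) auto
        hence "1 - N*y > 0" by linarith
        ultimately have T: "(1-N*y)*Gf N d y > 0" by (simp add: mult_pos_pos mult_neg_neg mult_neg_pos mult_pos_neg)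
        have "(y^2-1)*Df N d A y = -2*((1-N*y)*Gf N d y)" using identr[OF that(3)] by (simp only: mult.assoc)
        hence "(y^2-1)*Df N d A y < 0" using T by linarith
        moreover have "y^2 - 1 > 0" using one_less_power[of "-y" 2] that by simp
        ultimately show ?thesis by (simp add: mult_less_0_iff)
      qed
      have D2: "Df N d A y > 0" if "1 < y" "y < 1/N" "Pf N d A y = 0" for y
      proof -
        have "Gf N d y < 0" using Gneg that z1N by simp
        moreover have "1 - N*y > 0" using that assms(1) by (simp add: field_simps)
        ultimately have T: "(1-N*y)*Gf N d y < 0" by (simp add: mult_pos_pos mult_neg_neg mult_neg_pos mult_pos_neg)
        have "(y^2-1)*Df N d A y = -2*((1-N*y)*Gf N d y)" using identr[OF that(3)] by (simp only: mult.assoc)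
        hence "(y^2-1)*Df N d A y > 0" using T by linarith
        moreover have "y^2 - 1 > 0" using one_less_power[of y 2] that by simp
        ultimately show ?thesis by (simp add: zero_less_mult_iff)
      qed
      have D3: "Df N d A y < 0" if "1/N < y" "y < z01" "Pf N d A y = 0" for y
      proof -
        have "Gf N d y < 0" using Gneg that uN by simp
        moreover have "1 - N*y < 0" using that assms(1) by (simp add: field_simps)
        ultimately have T: "(1-N*y)*Gf N d y > 0" by (simp add: mult_pos_pos mult_neg_neg mult_neg_pos mult_pos_neg)
        have "(y^2-1)*Df N d A y = -2*((1-N*y)*Gf N d y)" using identr[OF that(3)] by (simp only: mult.assoc)
        hence "(y^2-1)*Df N d A y < 0" using T by linarith
        moreover have "y^2 - 1 > 0" using one_less_power[of y 2] that uN by simp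
        ultimately show ?thesis by (simp add: mult_less_0_iff)
      qed
      have D4: "Df N d A y > 0" if "z01 < y" "y < s" "Pf N d A y = 0" for y
      proof -
        have "Gf N d y > 0" using Gpos that by simp
        moreover have "1 - N*y < 0"
        proof -
          have "1/N < y" using that z1N by linarith
          thus ?thesis using assms(1) by (simp add: field_simps)
        qed
        ultimately have T: "(1-N*y)*Gf N d y < 0" by (simp add: mult_pos_pos mult_neg_neg mult_neg_pos mult_pos_neg)
        have "(y^2-1)*Df N d A y = -2*((1-N*y)*Gf N d y)" using identr[OF that(3)] by (simp only: mult.assoc)
        hence "(y^2-1)*Df N d A y > 0" using T by linarith
        moreover have "y^2 - 1 > 0" using one_less_power[of y 2] that z1 by simp
        ultimately show ?thesis by (simp add: zero_less_mult_iff)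
      qed
      have xs_pos: "Pf N d A x > 0" if "x^2 \<ge> s^2" for x
      proof -
        have e1: "x^2-1-d^2 \<ge> 0" using that s2 by simp
        have e2: "(1-N*x)^2*(x^2-1-d^2) \<ge> 0" using e1 by simp
        have "x^2 - 1 > 0" using that s2 d0 by (smt (verit) zero_less_power2)
        hence e3: "A*(x^2-1) > 0" using A by simp
        show ?thesis unfolding Pf_def using e2 e3 by linarith
      qed
      have roots: "x = r1 \<or> x = r2" if "Pf N d A x = 0" for x
      proof -
        consider "x \<le> -s" | "-s < x \<and> x < -1" | "-1 \<le> x \<and> x \<le> 1" | "1 < x \<and> x < 1/N"
          | "x = 1/N" | "1/N < x \<and> x < z01" | "x = z01" | "z01 < x \<and> x < s" | "s \<le> x"
          by linarith
        thus ?thesis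
        proof cases
          case 1
          hence "x^2 \<ge> s^2" using s0 power_mono[of s "-x" 2] by simp
          hence "Pf N d A x > 0" using xs_pos by blast
          thus ?thesis using that by simp
        next
          case 9
          hence "x^2 \<ge> s^2" using s0 power_mono[of s "x" 2] by simp
          hence "Pf N d A x > 0" using xs_pos by blast
          thus ?thesis using that by simp
        next
          case 2
          show ?thesis
          proof (rule ccontr)
            assume "\<not> (x = r1 \<or> x = r2)"
            hence "x < r1 \<or> r1 < x" by auto
            thus False
            proof
              assume "x < r1" thus False
                using L3[of "-s" "-1" p x r1] D1 2 r1 that pP dpD by auto
            next
              assume "r1 < x" thus False
                using L3[of "-s" "-1" p r1 x] D1 2 r1 that pP dpD by auto
            qed
          qed
        next
          case 4
          show ?thesis
          proof (rule ccontr)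
            assume "\<not> (x = r1 \<or> x = r2)"
            hence "x < r2 \<or> r2 < x" by auto
            thus False
            proof
              assume "x < r2" thus False
                using L3'[of 1 "1/N" p x r2] D2 4 r2 that pP dpD by auto
            next
              assume "r2 < x" thus False
                using L3'[of 1 "1/N" p r2 x] D2 4 r2 that pP dpD by auto
            qed
          qed
        next
          case 3
          have x21: "x^2 \<le> 1" using 3 abs_square_le_1[of x] by auto
          have "N*x \<le> N*1" using 3 assms(1) by (intro mult_left_mono) auto
          hence "N*x < 1" using assms(2) by linarith
          hence c1: "(1-N*x)^2 > 0" by simp
          have c2: "x^2-1-d^2 < 0" using x21 d0 by (smt (verit) zero_less_power2)
          have c3: "(1-N*x)^2*(x^2-1-d^2) < 0" using c1 c2 by (rule mult_pos_neg)
          have c4: "A*(x^2-1) \<le> 0" using A x21 by (intro mult_nonneg_nonpos) auto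
          have "Pf N d A x < 0" unfolding Pf_def using c3 c4 by linarith
          thus ?thesis using that by simp
        next
          case 5 thus ?thesis using that P1N by simp
        next
          case 7 thus ?thesis using that Pz0 by simp
        next
          case 6
          have "poly p x \<noteq> 0"
            by (rule L1[of "1/N" z01 p x]) (use 6 z1N Pz0 D3 pP dpD in auto)
          thus ?thesis using that pP by simp
        next
          case 8
          have "poly p x \<noteq> 0"
            by (rule L2[of z01 s p x]) (use 8 z1 Pz0 D4 pP dpD in auto)
          thus ?thesis using that pP by simp
        qed
      qed
      have o1: "order (complex_of_real r1) Q = 1" using ord1[OF r1(3)] D1[OF r1] by simp
      have o2: "order (complex_of_real r2) Q = 1" using ord1[OF r2(3)] D2[OF r2] by simp
      have r12: "r1 \<noteq> r2" using r1 r2 by simp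
      have FmEq: "Fm = {#complex_of_real r1, complex_of_real r2#}"
      proof (rule multiset_eqI)
        fix x
        show "count Fm x = count {#complex_of_real r1, complex_of_real r2#} x"
        proof (cases "x \<in> \<real>")
          case True
          then obtain t where t: "x = complex_of_real t" by (auto elim: Reals_cases)
          show ?thesis
          proof (cases "Pf N d A t = 0")
            case True
            thus ?thesis using roots[OF True] o1 o2 r12 t cFm by auto
          next
            case False
            hence "order x Q = 0" using order_root[of Q x] Qroot[of t] t by auto
            moreover have "t \<noteq> r1" "t \<noteq> r2" using False r1 r2 by auto
            ultimately show ?thesis using t cFm by simp
          qed
        next
          case False
          hence "x \<noteq> complex_of_real r1" "x \<noteq> complex_of_real r2" by auto
          thus ?thesis using False cFm by simp
        qed
      qed
      show "real_root_count (KH_quartic N d A) = 2" using rrc FmEq by simp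
      show "nonreal_root_count (KH_quartic N d A) = 2" using nrc FmEq by simp
    qed
  qed
  show ?thesis using part1 part2 by blast
qed

end
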